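(* Let $\Omega\subset\mathbb{C}^n$ be an open connected subset and $f_m\colon\Omega\to\mathbb{C}^n$ ($m\in\mathbb{N}$) holomorphic maps converging locally uniformly to $\mathrm{id}|_\Omega\colon\Omega\to\mathbb{C}^n$. Let $D>0$ be an integer and assume there is a non-empty open relatively compact subset $\Omega'\subset\Omega$ such that $(f_m)^i(\overline{\Omega'})\subseteq\Omega$ for all iterates $i=1,\dots,D$ and all $m$, and $(f_m)^D=\mathrm{id}$ on $\Omega'$ for all $m$. Then $f_m=\mathrm{id}|_\Omega$ for all $m\gg0$. *)

theory Defs
  imports "HOL-Analysis.Analysis"
begin

definition complex_linear_vec :: "(complex^'n \<Rightarrow> complex^'m) \<Rightarrow> bool" where
  "complex_linear_vec L \<longleftrightarrow>
     (\<forall>x y. L (x + y) = L x + L y) \<and> (\<forall>c x. L (c *s x) = c *s L x)"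

definition holomorphic_vec_on :: "(complex^'n \<Rightarrow> complex^'m) \<Rightarrow> (complex^'n) set \<Rightarrow> bool" where
  "holomorphic_vec_on f S \<longleftrightarrow>
     (\<forall>z\<in>S. \<exists>L. complex_linear_vec L \<and> (f has_derivative L) (at z))"

definition locally_uniform_limit :: "'a::topological_space set \<Rightarrow> (nat \<Rightarrow> 'a \<Rightarrow> 'b::metric_space) \<Rightarrow> ('a \<Rightarrow> 'b) \<Rightarrow> bool" where
  "locally_uniform_limit S f g \<longleftrightarrow>
     (\<forall>x\<in>S. \<exists>U. open U \<and> x \<in> U \<and> U \<subseteq> S \<and> uniform_limit U f g sequentially)"

end

theory Submission
  imports Defs "HOL-Complex_Analysis.Complex_Analysis"
begin

lemma bl_smult: "bounded_linear (\<lambda>x::complex. x *s (v::complex^'n))"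
proof (rule bounded_linear_intro[where K="\<Sum>i\<in>UNIV. norm (v$i)"])
  fix x :: complex
  have "norm (x *s v) \<le> (\<Sum>i\<in>UNIV. norm ((x *s v)$i))" unfolding norm_vec_def by (rule L2_set_le_sum) auto
  also have "\<dots> = norm x * (\<Sum>i\<in>UNIV. norm (v$i))"
    by (simp add: norm_mult sum_distrib_left)
  finally show "norm (x *s v) \<le> norm x * (\<Sum>i\<in>UNIV. norm (v$i))" .
qed (auto simp: vector_ssub_ldistrib algebra_simps vec_eq_iff)

lemma line_holo:
  fixes F :: "complex^'n \<Rightarrow> complex^'n"
  assumes hol: "holomorphic_vec_on F \<Omega>"
  shows "(\<lambda>t. (F (a + t *s v) - (a + t *s v)) $ j) holomorphic_on {t. a + t *s v \<in> \<Omega>}"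
proof -
  have "(\<lambda>t. (F (a + t *s v) - (a + t *s v)) $ j) field_differentiable at t"
    if t: "a + t *s v \<in> \<Omega>" for t
  proof -
    obtain L where L: "complex_linear_vec L" "(F has_derivative L) (at (a + t *s v))"
      using hol t unfolding holomorphic_vec_on_def by blast
    have d1: "((\<lambda>t. a + t *s v) has_derivative (\<lambda>s. s *s v)) (at t)"
      by (auto intro!: derivative_eq_intros bounded_linear_imp_has_derivative[OF bl_smult])
    have d2: "((\<lambda>t. F (a + t *s v)) has_derivative (\<lambda>s. L (s *s v))) (at t)"
      using has_derivative_compose[OF d1 L(2)] by (simp add: o_def)
    have d3: "((\<lambda>t. (F (a + t *s v) - (a + t *s v)) $ j) has_derivative
               (\<lambda>s. (L (s *s v) - s *s v) $ j)) (at t)"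
      by (intro bounded_linear.has_derivative[OF bounded_linear_vec_nth] has_derivative_diff d2 d1)
    have "(\<lambda>s. (L (s *s v) - s *s v) $ j) = (\<lambda>s. s * ((L v - v) $ j))"
      using L(1) unfolding complex_linear_vec_def by (auto simp: algebra_simps)
    with d3 show ?thesis
      unfolding field_differentiable_def has_field_derivative_def
      by (intro exI[of _ "(L v - v) $ j"]) (simp add: mult.commute[of _ "L v $ j - v $ j"])
  qed
  then show ?thesis
    unfolding holomorphic_on_def using field_differentiable_at_within by blast
qed

lemma schwarz_diff:
  fixes g :: "complex \<Rightarrow> complex"
  assumes hol: "g holomorphic_on ball 0 R" and R: "R > 1"
    and bd: "\<And>t. t \<in> ball 0 R \<Longrightarrow> norm (g t) \<le> \<eta>"
  shows "norm (g 1 - g 0) \<le> 3 * \<eta> / R"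
proof -
  have 1: "1 \<in> ball (0::complex) R" "0 \<in> ball (0::complex) R" using R by auto
  have e0: "\<eta> \<ge> 0" using bd[OF 1(2)] norm_ge_zero order_trans by blast
  show ?thesis
  proof (cases "\<eta> = 0")
    case True
    then show ?thesis using bd[OF 1(1)] bd[OF 1(2)] by simp
  next
    case False
    with e0 have ep: "\<eta> > 0" by simp
    define G where "G s = (g (of_real R * s) - g 0) / of_real (3 * \<eta>)" for s
    have im: "(\<lambda>s. of_real R * s) ` ball (0::complex) 1 \<subseteq> ball 0 R"
      proof (rule image_subsetI)
        fix s :: complex assume "s \<in> ball 0 1"
        then have "norm s < 1" by simp
        then have "R * norm s < R * 1" using R by (intro mult_strict_left_mono) auto
        then show "of_real R * s \<in> ball 0 R" using R by (simp add: norm_mult)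
      qed
    have hc: "(\<lambda>s. g (of_real R * s)) holomorphic_on ball 0 1"
      using holomorphic_on_compose_gen[OF _ hol im] by (simp add: o_def holomorphic_intros)
    have "G holomorphic_on ball 0 1"
      unfolding G_def using ep by (intro holomorphic_intros hc) auto
    moreover have "G 0 = 0" by (simp add: G_def)
    moreover have "norm (G z) < 1" if "norm z < 1" for z
    proof -
      have "of_real R * z \<in> ball 0 R" using that R by (simp add: norm_mult)
      then have "norm (g (of_real R * z) - g 0) \<le> 2 * \<eta>"
        using bd[OF 1(2)] bd norm_triangle_ineq4 by (smt (verit))
      then show ?thesis using ep unfolding G_def by (simp add: norm_divide)
    qed
    moreover have "norm (1 / of_real R :: complex) < 1" using R by (simp add: norm_divide)
    ultimately have "norm (G (1 / of_real R)) \<le> norm (1 / of_real R :: complex)"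
      by (rule Schwarz_Lemma(1))
    then have "norm (g 1 - g 0) / (3 * \<eta>) \<le> 1 / R"
      using R ep unfolding G_def by (simp add: norm_divide)
    then show ?thesis using ep R by (simp add: field_simps)
  qed
qed

lemma local_ident:
  fixes F :: "complex^'n \<Rightarrow> complex^'n"
  assumes hol: "holomorphic_vec_on F \<Omega>" and op: "open \<Omega>"
    and sub: "ball q R \<subseteq> \<Omega>" and e: "e > 0" and id: "\<And>y. y \<in> ball q e \<Longrightarrow> F y = y"
    and y: "y \<in> ball q R"
  shows "F y = y"
proof (cases "y = q")
  case True
  then show ?thesis using id e by simp
next
  case False
  define v where "v = y - q"
  have nv: "norm v > 0" using False by (simp add: v_def)
  have Rv: "norm v < R" using y by (simp add: v_def dist_norm norm_minus_commute)
  define S where "S = ball (0::complex) (R / norm v)"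
  have inS: "q + t *s v \<in> ball q R" if "t \<in> S" for t
  proof -
    have "norm (t *s v) = norm t * norm v"
      unfolding norm_vec_def by (simp add: norm_mult L2_set_right_distrib)
    then show ?thesis using that nv by (simp add: S_def dist_norm field_simps)
  qed
  have "(F y - y) $ j = 0" for j
  proof -
    let ?g = "\<lambda>t. (F (q + t *s v) - (q + t *s v)) $ j"
    have "?g holomorphic_on {t. q + t *s v \<in> \<Omega>}" by (rule line_holo[OF hol])
    moreover have "S \<subseteq> {t. q + t *s v \<in> \<Omega>}" using inS sub by blast
    ultimately have h: "?g holomorphic_on S" by (rule holomorphic_on_subset)
    define U where "U = ball (0::complex) (min e R / norm v)"
    have "R > 0" using Rv nv by linarith
    then have eR: "min e R > 0" using e by simp
    have "?g 1 = 0"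
    proof (rule analytic_continuation[OF h, of U 0])
      show "open S" "connected S" by (auto simp: S_def)
      show "U \<subseteq> S" unfolding U_def S_def by (intro subset_ball divide_right_mono) auto
      show "0 \<in> S" using Rv nv \<open>R > 0\<close> by (simp add: S_def)
      show "0 islimpt U" using eR nv by (simp add: U_def islimpt_ball)
      show "1 \<in> S" using Rv nv by (simp add: S_def)
      fix z assume z: "z \<in> U"
      have "norm (z *s v) = norm z * norm v"
        unfolding norm_vec_def by (simp add: norm_mult L2_set_right_distrib)
      also have "\<dots> < min e R" using z nv by (simp add: U_def field_simps)
      finally have "q + z *s v \<in> ball q e" by (simp add: dist_norm)
      then show "?g z = 0" using id by simp
    qed
    then show ?thesis by (simp add: v_def)
  qed
  then show ?thesis by (simp add: vec_eq_iff)
qed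

lemma ident_thm:
  fixes F :: "complex^'n \<Rightarrow> complex^'n"
  assumes hol: "holomorphic_vec_on F \<Omega>" and op: "open \<Omega>" and cn: "connected \<Omega>"
    and U: "open U" "U \<noteq> {}" "U \<subseteq> \<Omega>" and idU: "\<And>y. y \<in> U \<Longrightarrow> F y = y"
    and z: "z \<in> \<Omega>"
  shows "F z = z"
proof -
  define A where "A = {p\<in>\<Omega>. \<exists>e>0. \<forall>y\<in>ball p e. F y = y}"
  define B where "B = \<Omega> - A"
  have oA: "open A"
    unfolding open_contains_ball
  proof
    fix p assume "p \<in> A"
    then obtain e where e: "e > 0" "\<forall>y\<in>ball p e. F y = y" and p: "p \<in> \<Omega>"
      unfolding A_def by blast
    obtain d where d: "d > 0" "ball p d \<subseteq> \<Omega>" using op p open_contains_ball by blast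
    have "ball p (min d e) \<subseteq> A"
    proof
      fix q assume q: "q \<in> ball p (min d e)"
      have "ball q (min d e - dist p q) \<subseteq> ball p e"
        by (auto simp: subset_eq) (metis dist_triangle less_diff_eq min_less_iff_conj order_le_less_trans add.commute)
      moreover have "min d e - dist p q > 0" using q by simp
      moreover have "q \<in> \<Omega>" using q d by auto
      ultimately show "q \<in> A" unfolding A_def using e by blast
    qed
    then show "\<exists>e>0. ball p e \<subseteq> A" using d e by (intro exI[of _ "min d e"]) auto
  qed
  have oB: "open B"
    unfolding open_contains_ball
  proof
    fix p assume "p \<in> B"
    then have p: "p \<in> \<Omega>" "p \<notin> A" unfolding B_def by auto
    obtain d where d: "d > 0" "ball p d \<subseteq> \<Omega>" using op p open_contains_ball by blast
    have "ball p (d/2) \<subseteq> B"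
    proof
      fix q assume q: "q \<in> ball p (d/2)"
      have qO: "q \<in> \<Omega>" using q d by auto
      have "q \<notin> A"
      proof
        assume "q \<in> A"
        then obtain e where e: "e > 0" "\<forall>y\<in>ball q e. F y = y" unfolding A_def by blast
        have sub: "ball q (d/2) \<subseteq> \<Omega>"
          using d q by (metis dist_commute dist_triangle_half_r mem_ball subset_eq)
        have all: "F y = y" if "y \<in> ball q (d/2)" for y
          by (rule local_ident[OF hol op sub e(1)]) (use e that in auto)
        have "p \<in> A"
          unfolding A_def
        proof (intro CollectI conjI exI[of _ "d/2 - dist q p"])
          show "p \<in> \<Omega>" by fact
          show "d/2 - dist q p > 0" using q by (simp add: dist_commute)
          show "\<forall>y\<in>ball p (d / 2 - dist q p). F y = y"
          proof
            fix y assume "y \<in> ball p (d / 2 - dist q p)"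
            then have "y \<in> ball q (d/2)"
              by (metis dist_triangle add.commute mem_ball less_diff_eq order_le_less_trans)
            then show "F y = y" by (rule all)
          qed
        qed
        with p show False by simp
      qed
      then show "q \<in> B" using qO by (simp add: B_def)
    qed
    then show "\<exists>e>0. ball p e \<subseteq> B" using d by (intro exI[of _ "d/2"]) auto
  qed
  have "A \<noteq> {}"
  proof -
    obtain u where u: "u \<in> U" using U by auto
    obtain e where "e > 0" "ball u e \<subseteq> U" using U(1) u open_contains_ball by blast
    then have "u \<in> A" using u U idU unfolding A_def by blast
    then show ?thesis by auto
  qed
  moreover have "A \<inter> B \<inter> \<Omega> = {}" "\<Omega> \<subseteq> A \<union> B" "A \<subseteq> \<Omega>"
    unfolding B_def A_def by auto
  ultimately have "B \<inter> \<Omega> = {}" using connectedD[OF cn oA oB] by auto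
  then have "z \<in> A" using z B_def by auto
  then show ?thesis unfolding A_def by auto
qed

lemma norm_smult_vec: "norm (t *s (v::complex^'n)) = norm t * norm v"
  unfolding norm_vec_def by (simp add: norm_mult L2_set_right_distrib)

lemma core:
  fixes F :: "complex^'n \<Rightarrow> complex^'n"
  assumes hol: "holomorphic_vec_on F \<Omega>" and op: "open \<Omega>"
    and r: "r > 0" and cb: "\<And>x. x \<in> K \<Longrightarrow> cball x (3*r) \<subseteq> \<Omega>"
    and sub: "\<Omega>' \<subseteq> K" and ne: "\<Omega>' \<noteq> {}"
    and bd: "\<And>x y. x \<in> K \<Longrightarrow> dist x y \<le> 3*r \<Longrightarrow> norm (F y - y) \<le> \<eta>"
    and D: "D > 0" and per: "\<And>z. z \<in> \<Omega>' \<Longrightarrow> (F^^D) z = z"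
    and eta: "3 * \<eta> * D * CARD('n) \<le> r" and eta0: "\<eta> \<ge> 0"
    and z0: "z0 \<in> \<Omega>'"
  shows "F z0 = z0"
proof -
  define N where "N = CARD('n)"
  have N1: "real N \<ge> 1" unfolding N_def by (simp add: Suc_le_eq)
  have Deta: "D * \<eta> \<le> r"
  proof -
    have "D * \<eta> = D * \<eta> * 1" by simp
    also have "\<dots> \<le> D * \<eta> * N" using N1 eta0 by (intro mult_left_mono) auto
    also have "\<dots> \<le> 3 * \<eta> * D * N" using N1 eta0 by simp
    also have "\<dots> \<le> r" using eta by (simp add: N_def)
    finally show ?thesis .
  qed
  define h where "h w = F w - w" for w
  define P where "P = {w. \<exists>z\<in>\<Omega>'. \<exists>k. w = (F^^k) z}"
  have permult: "(F^^(D*q)) z = z" if "z \<in> \<Omega>'" for z q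
  proof (induction q)
    case (Suc q)
    have "(F^^(D*Suc q)) z = (F^^D) ((F^^(D*q)) z)" by (simp add: funpow_add)
    then show ?case using Suc per[OF that] by simp
  qed simp
  have permod: "(F^^k) z = (F^^(k mod D)) z" if "z \<in> \<Omega>'" for z k
  proof -
    have "(F^^k) z = (F^^(k mod D + D * (k div D))) z" by simp
    also have "\<dots> = (F^^(k mod D)) ((F^^(D * (k div D))) z)" by (simp only: funpow_add o_def)
    finally show ?thesis using permult[OF that] by simp
  qed
  have orbit: "dist ((F^^k) z) z \<le> k * \<eta>" if "z \<in> K" "k \<le> D" for z k
    using that(2)
  proof (induction k)
    case (Suc k)
    let ?y = "(F^^k) z"
    have dy: "dist ?y z \<le> k * \<eta>" using Suc by simp
    have "k * \<eta> \<le> D * \<eta>" using Suc eta0 by (intro mult_right_mono) auto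
    then have "dist z ?y \<le> 3 * r" using dy Deta r by (simp add: dist_commute)
    then have "norm (F ?y - ?y) \<le> \<eta>" by (rule bd[OF that(1)])
    then have "dist (F ?y) z \<le> \<eta> + k * \<eta>"
      using dy dist_triangle[of "F ?y" z ?y] by (simp add: dist_norm)
    then show ?case by (simp add: algebra_simps)
  qed simp
  have nearK: "\<exists>x\<in>K. dist x w \<le> r" if wP: "w \<in> P" for w
  proof -
    obtain z k where z: "z \<in> \<Omega>'" "w = (F^^k) z" using wP P_def by blast
    have w: "w = (F^^(k mod D)) z" using permod[OF z(1)] z(2) by simp
    have "k mod D \<le> D" using D by (simp add: less_imp_le)
    moreover have zK: "z \<in> K" using z sub by blast
    ultimately have "dist ((F^^(k mod D)) z) z \<le> (k mod D) * \<eta>" by (intro orbit)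
    then have "dist w z \<le> (k mod D) * \<eta>" using w by simp
    also have "\<dots> \<le> D * \<eta>" using \<open>k mod D \<le> D\<close> eta0 by (intro mult_right_mono) auto
    finally have "dist z w \<le> r" using Deta by (simp add: dist_commute)
    then show ?thesis using zK by blast
  qed
  have hP: "norm (h w) \<le> \<eta>" if wP: "w \<in> P" for w
  proof -
    obtain x where "x \<in> K" "dist x w \<le> r" using nearK[OF wP] by blast
    then show ?thesis unfolding h_def using bd r by auto
  qed
  have Pinv: "(F^^i) w \<in> P" if wP: "w \<in> P" for w i
  proof -
    obtain z k where z: "z \<in> \<Omega>'" "w = (F^^k) z" using wP P_def by blast
    have "(F^^i) w = (F^^(i+k)) z" using z by (simp add: funpow_add)
    then show ?thesis using z P_def by blast
  qed
  have Pper: "(F^^D) w = w" if wP: "w \<in> P" for w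
  proof -
    obtain z k where z: "z \<in> \<Omega>'" "w = (F^^k) z" using wP P_def by blast
    have "(F^^D) w = (F^^(D+k)) z" using z by (simp add: funpow_add)
    also have "\<dots> = (F^^(k+D)) z" by (simp only: add.commute)
    also have "\<dots> = (F^^k) ((F^^D) z)" by (simp only: funpow_add o_def)
    finally show ?thesis using z per by simp
  qed
  have P0: "\<Omega>' \<subseteq> P" unfolding P_def by (auto intro!: exI[of _ 0])
  define S where "S = Sup ((\<lambda>w. norm (h w)) ` P)"
  have Pne: "P \<noteq> {}" using P0 ne by auto
  have bdd: "bdd_above ((\<lambda>w. norm (h w)) ` P)" using hP by (intro bdd_aboveI2) auto
  have S1: "norm (h w) \<le> S" if wP: "w \<in> P" for w
    unfolding S_def using bdd that by (intro cSup_upper) auto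
  have S0: "S \<ge> 0" using S1 Pne norm_ge_zero order_trans by blast
  have S2: "S \<le> \<eta>" unfolding S_def using Pne hP by (intro cSup_least) auto
  have step: "dist ((F^^i) w) w \<le> i * S" if wP: "w \<in> P" for w i
  proof (induction i)
    case (Suc i)
    have "dist (F ((F^^i) w)) ((F^^i) w) \<le> S"
      using S1[OF Pinv[OF that, of i]] by (simp add: h_def dist_norm)
    then show ?case using Suc dist_triangle[of "F ((F^^i) w)" w "(F^^i) w"] by (simp add: algebra_simps)
  qed simp
  have tele: "(\<Sum>i<D. h ((F^^i) w)) = 0" if wP: "w \<in> P" for w
  proof -
    have "(\<Sum>i<D. h ((F^^i) w)) = (\<Sum>i<D. (F^^(Suc i)) w - (F^^i) w)"
      by (simp add: h_def)
    also have "\<dots> = (F^^D) w - (F^^0) w" by (rule sum_lessThan_telescope)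
    finally show ?thesis using Pper[OF that] by simp
  qed
  have diff: "norm (h ((F^^i) w) - h w) \<le> N * (3 * \<eta> * (D * S) / (2 * r))"
    if w: "w \<in> P" and i: "i < D" for w i
  proof -
    define b where "b = (F^^i) w"
    define v where "v = b - w"
    have rhs0: "N * (3 * \<eta> * (D * S) / (2 * r)) \<ge> 0" using S0 eta0 r by simp
    show ?thesis
    proof (cases "v = 0")
      case True
      then show ?thesis using rhs0 by (simp add: v_def b_def)
    next
      case False
      then have nv: "norm v > 0" by simp
      have "norm v \<le> i * S" using step[OF w, of i] by (simp add: v_def b_def dist_norm)
      also have "\<dots> \<le> D * S" using i S0 by (intro mult_right_mono) auto
      finally have vDS: "norm v \<le> D * S" .
      also have "\<dots> \<le> D * \<eta>" using S2 by (intro mult_left_mono) auto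
      finally have vr: "norm v \<le> r" using Deta by simp
      define R where "R = 2 * r / norm v"
      have R1: "R > 1" unfolding R_def using vr nv r by (simp add: field_simps)
      obtain x where x: "x \<in> K" "dist x w \<le> r" using nearK[OF w] by blast
      have inK: "dist x (w + t *s v) \<le> 3 * r" "w + t *s v \<in> \<Omega>" if "t \<in> ball 0 R" for t
      proof -
        have "norm (t *s v) = norm t * norm v" by (rule norm_smult_vec)
        also have "\<dots> < R * norm v" using that nv by (intro mult_strict_right_mono) auto
        also have "\<dots> = 2 * r" using nv by (simp add: R_def)
        finally have "norm (t *s v) < 2 * r" .
        then have "dist w (w + t *s v) < 2 * r" by (simp add: dist_norm)
        then show "dist x (w + t *s v) \<le> 3 * r" using x dist_triangle[of x "w + t *s v" w] by simp
        then show "w + t *s v \<in> \<Omega>" using cb[OF x(1)] by auto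
      qed
      have comp: "norm ((h b - h w) $ j) \<le> 3 * \<eta> * (D * S) / (2 * r)" for j
      proof -
        let ?g = "\<lambda>t. (F (w + t *s v) - (w + t *s v)) $ j"
        have "?g holomorphic_on {t. w + t *s v \<in> \<Omega>}" by (rule line_holo[OF hol])
        then have hg: "?g holomorphic_on ball 0 R"
          by (rule holomorphic_on_subset) (use inK in auto)
        have "norm (?g t) \<le> \<eta>" if "t \<in> ball 0 R" for t
          using Finite_Cartesian_Product.norm_nth_le[of "F (w + t *s v) - (w + t *s v)" j] bd[OF x(1) inK(1)[OF that]]
          by linarith
        then have "norm (?g 1 - ?g 0) \<le> 3 * \<eta> / R" by (rule schwarz_diff[OF hg R1])
        moreover have "?g 1 - ?g 0 = (h b - h w) $ j" by (simp add: h_def v_def)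
        moreover have "3 * \<eta> / R = 3 * \<eta> * norm v / (2 * r)" using nv by (simp add: R_def)
        moreover have "3 * \<eta> * norm v / (2 * r) \<le> 3 * \<eta> * (D * S) / (2 * r)"
          using vDS eta0 r by (intro divide_right_mono mult_left_mono) auto
        ultimately show ?thesis by simp
      qed
      have "norm (h b - h w) \<le> (\<Sum>j\<in>UNIV. norm ((h b - h w) $ j))"
        unfolding norm_vec_def by (rule L2_set_le_sum) auto
      also have "\<dots> \<le> (\<Sum>j\<in>(UNIV::'n set). 3 * \<eta> * (D * S) / (2 * r))"
        by (intro sum_mono comp)
      also have "\<dots> = N * (3 * \<eta> * (D * S) / (2 * r))" by (simp add: N_def)
      finally show ?thesis by (simp add: b_def)
    qed
  qed
  have half: "norm (h w) \<le> S / 2" if w: "w \<in> P" for w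
  proof -
    have "real D *\<^sub>R h w = (\<Sum>i<D. h w) - (\<Sum>i<D. h ((F^^i) w))"
      by (simp only: sum_constant_scaleR card_lessThan tele[OF w] diff_zero)
    also have "\<dots> = (\<Sum>i<D. h w - h ((F^^i) w))" by (simp add: sum_subtractf)
    finally have "D * norm (h w) = norm (\<Sum>i<D. h w - h ((F^^i) w))"
      by (metis norm_scaleR abs_of_nat)
    also have "\<dots> \<le> (\<Sum>i<D. norm (h w - h ((F^^i) w)))" by (rule norm_sum)
    also have "\<dots> \<le> (\<Sum>i<D. N * (3 * \<eta> * (D * S) / (2 * r)))"
      using diff[OF w] by (intro sum_mono) (simp add: norm_minus_commute)
    also have "\<dots> = D * (N * (3 * \<eta> * (D * S) / (2 * r)))" by simp
    finally have X: "real D * norm (h w) \<le> real D * (N * (3 * \<eta> * (D * S) / (2 * r)))" .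
    have "norm (h w) \<le> N * (3 * \<eta> * (D * S) / (2 * r))"
      by (rule mult_left_le_imp_le[OF X]) (use D in simp)
    also have "\<dots> = (3 * \<eta> * D * N) * S / (2 * r)" by (simp add: field_simps)
    also have "\<dots> \<le> r * S / (2 * r)"
      using eta S0 r by (intro divide_right_mono mult_right_mono) (auto simp: N_def)
    also have "\<dots> = S / 2" using r by simp
    finally show ?thesis .
  qed
  have "S \<le> S / 2" unfolding S_def using Pne half by (intro cSup_least) (auto simp: S_def)
  then have "S \<le> 0" by simp
  then have "norm (h z0) \<le> 0" using S1[of z0] P0 z0 by (meson order_trans subsetD)
  then show ?thesis by (simp add: h_def)
qed

theorem proposition3p8:
  fixes \<Omega> \<Omega>' :: "(complex^'n) set"
    and f :: "nat \<Rightarrow> complex^'n \<Rightarrow> complex^'n"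
    and D :: nat
  assumes "open \<Omega>" and "connected \<Omega>"
    and "\<And>m. holomorphic_vec_on (f m) \<Omega>"
    and "locally_uniform_limit \<Omega> f id"
    and "D > 0"
    and "open \<Omega>'" and "\<Omega>' \<noteq> {}"
    and "compact (closure \<Omega>')" and "closure \<Omega>' \<subseteq> \<Omega>"
    and "\<And>m i. 1 \<le> i \<Longrightarrow> i \<le> D \<Longrightarrow> (f m ^^ i) ` closure \<Omega>' \<subseteq> \<Omega>"
    and "\<And>m z. z \<in> \<Omega>' \<Longrightarrow> (f m ^^ D) z = z"
  shows "\<exists>M. \<forall>m\<ge>M. \<forall>z\<in>\<Omega>. f m z = z"
proof -
  note op = assms(1) and cn = assms(2) and hol = assms(3) and lu = assms(4) and D = assms(5)
    and op' = assms(6) and ne = assms(7) and cK = assms(8) and KO = assms(9) and per = assms(11)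
  define K where "K = closure \<Omega>'"
  obtain \<epsilon> where \<epsilon>: "\<epsilon> > 0" "(\<Union>x\<in>K. cball x \<epsilon>) \<subseteq> \<Omega>"
    using compact_subset_open_imp_cball_epsilon_subset[OF cK op KO] K_def by blast
  define r where "r = \<epsilon> / 3"
  have r: "r > 0" using \<epsilon> by (simp add: r_def)
  have cb: "cball x (3*r) \<subseteq> \<Omega>" if "x \<in> K" for x using \<epsilon> that by (auto simp: r_def)
  define K3 where "K3 = {y. \<exists>x\<in>K. dist x y \<le> 3*r}"
  have K3eq: "K3 = (\<Union>x\<in>K. \<Union>y\<in>cball 0 (3*r). {x + y})"
  proof (rule set_eqI, rule iffI)
    fix y assume "y \<in> K3"
    then obtain x where x: "x \<in> K" "dist x y \<le> 3*r" unfolding K3_def by blast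
    then have "y - x \<in> cball 0 (3*r)" by (simp add: dist_norm norm_minus_commute)
    then show "y \<in> (\<Union>x\<in>K. \<Union>y\<in>cball 0 (3*r). {x + y})" using x(1) by force
  next
    fix y assume "y \<in> (\<Union>x\<in>K. \<Union>y\<in>cball 0 (3*r). {x + y})"
    then obtain x u where "x \<in> K" "u \<in> cball 0 (3*r)" "y = x + u" by blast
    then show "y \<in> K3" unfolding K3_def by (auto simp: dist_norm norm_minus_commute intro!: bexI[of _ x])
  qed
  have cK3: "compact K3" unfolding K3eq using cK K_def by (intro compact_sums') auto
  have K3O: "K3 \<subseteq> \<Omega>" unfolding K3_def using cb by (fastforce simp: subset_eq)
  define N where "N = CARD('n)"
  define \<eta> where "\<eta> = r / (3 * D * N)"
  have Npos: "real N > 0" unfolding N_def by simp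
  have eta0: "\<eta> > 0" unfolding \<eta>_def using r D Npos by simp
  have eta: "3 * \<eta> * D * CARD('n) \<le> r" unfolding \<eta>_def N_def[symmetric] using D Npos by simp
  have "\<forall>y\<in>\<Omega>. \<exists>U. open U \<and> y \<in> U \<and> U \<subseteq> \<Omega> \<and> uniform_limit U f id sequentially"
    using lu unfolding locally_uniform_limit_def by blast
  then obtain U where U: "\<And>y. y \<in> \<Omega> \<Longrightarrow> open (U y) \<and> y \<in> U y \<and> uniform_limit (U y) f id sequentially"
    by metis
  obtain C where C: "C \<subseteq> K3" "finite C" "K3 \<subseteq> (\<Union>c\<in>C. U c)"
  proof (rule compactE_image[OF cK3])
    show "open (U c)" if "c \<in> K3" for c using U K3O that by blast
    show "K3 \<subseteq> (\<Union>c\<in>K3. U c)" using U K3O by blast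
  qed blast
  have "\<forall>c\<in>C. eventually (\<lambda>m. \<forall>x\<in>U c. dist (f m x) (id x) < \<eta>) sequentially"
  proof
    fix c assume "c \<in> C"
    then have "uniform_limit (U c) f id sequentially" using U C K3O by blast
    then show "eventually (\<lambda>m. \<forall>x\<in>U c. dist (f m x) (id x) < \<eta>) sequentially"
      using eta0 unfolding uniform_limit_iff by blast
  qed
  then have "eventually (\<lambda>m. \<forall>c\<in>C. \<forall>x\<in>U c. dist (f m x) (id x) < \<eta>) sequentially"
    by (rule eventually_ball_finite[OF C(2)])
  then obtain M where M: "\<And>m. m \<ge> M \<Longrightarrow> \<forall>c\<in>C. \<forall>x\<in>U c. dist (f m x) (id x) < \<eta>"
    unfolding eventually_sequentially by blast
  have "\<forall>m\<ge>M. \<forall>z\<in>\<Omega>. f m z = z"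
  proof (intro allI impI ballI)
    fix m z assume m: "m \<ge> M" and z: "z \<in> \<Omega>"
    have bd: "norm (f m y - y) \<le> \<eta>" if "x \<in> K" "dist x y \<le> 3*r" for x y
    proof -
      have "y \<in> K3" using that unfolding K3_def by blast
      then obtain c where "c \<in> C" "y \<in> U c" using C by blast
      then have "dist (f m y) y < \<eta>" using M[OF m] by fastforce
      then show ?thesis by (simp add: dist_norm)
    qed
    have idO: "f m y = y" if "y \<in> \<Omega>'" for y
      by (rule core[OF hol op r cb _ ne bd D per eta less_imp_le[OF eta0] that])
         (auto simp: K_def closure_subset)
    show "f m z = z"
      by (rule ident_thm[OF hol op cn op' ne _ idO z]) (use KO closure_subset in blast)+
  qed
  then show ?thesis by blast
qed

end
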